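(* Let $\underline a=\{a_i\}_{i\in I}$ be a pseudo-Cauchy sequence in $K$ such that $I^*$ has no maximum, and such that either $\underline a$ is of transcendental type, or $\underline a$ is of algebraic type with $\gamma_{\underline a}\neq\infty$. Let $g\in K[x]$ be such that every polynomial of degree smaller than $\deg g$ is fixed by $\underline a$. Then $v(g(a_i))=\nu_i(g)$ for all sufficiently large $i\in I^*$.
   Context: $(K,v)$ is a valued field with value group $\Gamma$. A pseudo-Cauchy sequence is $\underline a=\{a_i\}_{i\in I}\subseteq K$ with $I$ a well-ordered set of at least two elements such that $v(a_i-a_j)<v(a_j-a_k)$ whenever $i<j<k$. $I^*=I\setminus\{\max I\}$ if $I$ has a maximum, else $I^*=I$. For $i\in I^*$, $\gamma_i:=v(a_{i+1}-a_i)$ ($i+1$ the successor of $i$) and $\nu_i:=v_{a_i,\gamma_i}$, where $v_{a,\gamma}(\sum_k b_k(x-a)^k)=\min_k\{v(b_k)+k\gamma\}$. A polynomial $f$ is fixed by $\underline a$ if $\{v(f(a_i))\}_{i\in I}$ is ultimately constant. When $I^*$ has no maximum, $\underline a$ is of transcendental type if every $f\in K[x]$ is fixed by $\underline a$, and of algebraic type otherwise. For $\underline a$ of algebraic type, let $F$ be a monic polynomial of smallest degree not fixed by $\underline a$, $D=\{\alpha\in\Gamma_{\mathbb Q}\mid\alpha\le\nu_i(F)\text{ for some }i\in I^*\}$ ($\Gamma_{\mathbb Q}$ the divisible hull of $\Gamma$), and $\gamma_{\underline a}=\infty$ if $D=\Gamma_{\mathbb Q}$, and otherwise $\gamma_{\underline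 a}$ is the element of the universal ordered group realizing the quasi-cut $(D,\Gamma_{\mathbb Q}\setminus D)$ (in particular $\gamma_{\underline a}\neq\infty$ iff $D\neq\Gamma_{\mathbb Q}$). *)

theory Defs
  imports "HOL-Computational_Algebra.Polynomial" "HOL-Library.Extended"
begin

definition valuation :: "('a::field \<Rightarrow> 'g::linordered_ab_group_add extended) \<Rightarrow> bool" where
  "valuation v \<longleftrightarrow>
     (\<forall>x. v x = Pinf \<longleftrightarrow> x = 0) \<and>
     (\<forall>x. x \<noteq> 0 \<longrightarrow> v x \<in> range Fin) \<and>
     (\<forall>x y. v (x * y) = v x + v y) \<and>
     (\<forall>x y. min (v x) (v y) \<le> v (x + y))"

definition value_group :: "('a::field \<Rightarrow> 'g::linordered_ab_group_add extended) \<Rightarrow> 'g set" where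
  "value_group v = {g. Fin g \<in> range v}"

definition nsmul :: "nat \<Rightarrow> 'b::comm_monoid_add \<Rightarrow> 'b" where
  "nsmul n x = (\<Sum>_<n. x)"

definition pseudo_cauchy :: "('a::field \<Rightarrow> 'g::linordered_ab_group_add extended) \<Rightarrow> 'i::wellorder set \<Rightarrow> ('i \<Rightarrow> 'a) \<Rightarrow> bool" where
  "pseudo_cauchy v I a \<longleftrightarrow>
     (\<exists>i\<in>I. \<exists>j\<in>I. i \<noteq> j) \<and>
     (\<forall>i\<in>I. \<forall>j\<in>I. \<forall>k\<in>I. i < j \<and> j < k \<longrightarrow> v (a i - a j) < v (a j - a k))"

definition Istar :: "'i::wellorder set \<Rightarrow> 'i set" where
  "Istar I = {i\<in>I. \<exists>j\<in>I. i < j}"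

definition has_max :: "'i::linorder set \<Rightarrow> bool" where
  "has_max S \<longleftrightarrow> (\<exists>m\<in>S. \<forall>i\<in>S. i \<le> m)"

definition succ_in :: "'i::wellorder set \<Rightarrow> 'i \<Rightarrow> 'i" where
  "succ_in I i = (LEAST j. j \<in> I \<and> i < j)"

definition pc_gamma :: "('a::field \<Rightarrow> 'g::linordered_ab_group_add extended) \<Rightarrow> 'i::wellorder set \<Rightarrow> ('i \<Rightarrow> 'a) \<Rightarrow> 'i \<Rightarrow> 'g extended" where
  "pc_gamma v I a i = v (a (succ_in I i) - a i)"

text \<open>Monomial valuation v_{a,gamma}: writing f = sum_k b_k (x-a)^k, the minimum of
  v(b_k) + k gamma. The b_k are the coefficients of f(x + a).\<close>
definition mono_val :: "('a::field \<Rightarrow> 'g::linordered_ab_group_add extended) \<Rightarrow> 'a \<Rightarrow> 'g extended \<Rightarrow> 'a poly \<Rightarrow> 'g extended" where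
  "mono_val v c \<gamma> f = Min ((\<lambda>k. v (coeff (pcompose f [:c, 1:]) k) + nsmul k \<gamma>) ` {..degree f})"

definition pc_nu :: "('a::field \<Rightarrow> 'g::linordered_ab_group_add extended) \<Rightarrow> 'i::wellorder set \<Rightarrow> ('i \<Rightarrow> 'a) \<Rightarrow> 'i \<Rightarrow> 'a poly \<Rightarrow> 'g extended" where
  "pc_nu v I a i = mono_val v (a i) (pc_gamma v I a i)"

definition fixed_by :: "('a::field \<Rightarrow> 'g::linordered_ab_group_add extended) \<Rightarrow> 'i::wellorder set \<Rightarrow> ('i \<Rightarrow> 'a) \<Rightarrow> 'a poly \<Rightarrow> bool" where
  "fixed_by v I a f \<longleftrightarrow>
     (\<exists>i0\<in>I. \<forall>i\<in>I. \<forall>j\<in>I. i0 \<le> i \<and> i0 \<le> j \<longrightarrow> v (poly f (a i)) = v (poly f (a j)))"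

definition transcendental_type :: "('a::field \<Rightarrow> 'g::linordered_ab_group_add extended) \<Rightarrow> 'i::wellorder set \<Rightarrow> ('i \<Rightarrow> 'a) \<Rightarrow> bool" where
  "transcendental_type v I a \<longleftrightarrow> (\<forall>f. fixed_by v I a f)"

definition algebraic_type :: "('a::field \<Rightarrow> 'g::linordered_ab_group_add extended) \<Rightarrow> 'i::wellorder set \<Rightarrow> ('i \<Rightarrow> 'a) \<Rightarrow> bool" where
  "algebraic_type v I a \<longleftrightarrow> \<not> transcendental_type v I a"

definition minimal_unfixed :: "('a::field \<Rightarrow> 'g::linordered_ab_group_add extended) \<Rightarrow> 'i::wellorder set \<Rightarrow> ('i \<Rightarrow> 'a) \<Rightarrow> 'a poly \<Rightarrow> bool" where
  "minimal_unfixed v I a F \<longleftrightarrow>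
     lead_coeff F = 1 \<and> \<not> fixed_by v I a F \<and>
     (\<forall>G. lead_coeff G = 1 \<and> \<not> fixed_by v I a G \<longrightarrow> degree F \<le> degree G)"

text \<open>D = {alpha in Gamma_Q | alpha <= nu_i(F) for some i in I^*}. An element of the
  divisible hull Gamma_Q is alpha = g/n with g in Gamma, n >= 1; for beta in Gamma
  (or infinity), g/n <= beta iff g <= n*beta. The set D equals Gamma_Q unless some alpha
  lies outside D. gamma_a /= infinity iff D /= Gamma_Q.\<close>
definition in_D :: "('a::field \<Rightarrow> 'g::linordered_ab_group_add extended) \<Rightarrow> 'i::wellorder set \<Rightarrow> ('i \<Rightarrow> 'a) \<Rightarrow> 'a poly \<Rightarrow> 'g \<Rightarrow> nat \<Rightarrow> bool" where
  "in_D v I a F g n \<longleftrightarrow> (\<exists>i\<in>Istar I. Fin g \<le> nsmul n (pc_nu v I a i F))"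

definition D_is_all :: "('a::field \<Rightarrow> 'g::linordered_ab_group_add extended) \<Rightarrow> 'i::wellorder set \<Rightarrow> ('i \<Rightarrow> 'a) \<Rightarrow> 'a poly \<Rightarrow> bool" where
  "D_is_all v I a F \<longleftrightarrow> (\<forall>g\<in>value_group v. \<forall>n>0. in_D v I a F g n)"

definition gamma_finite :: "('a::field \<Rightarrow> 'g::linordered_ab_group_add extended) \<Rightarrow> 'i::wellorder set \<Rightarrow> ('i \<Rightarrow> 'a) \<Rightarrow> bool" where
  "gamma_finite v I a \<longleftrightarrow> (\<exists>F. minimal_unfixed v I a F \<and> \<not> D_is_all v I a F)"

end

theory Submission
  imports Defs
begin


lemma val_nonMinf: assumes "valuation v" shows "v x \<noteq> Minf"
proof -
  have "x = 0 \<Longrightarrow> v x = Pinf" "x \<noteq> 0 \<Longrightarrow> v x \<in> range Fin" using assms unfolding valuation_def by auto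
  then show ?thesis by (cases "x = 0") auto
qed

lemma val_cases: assumes "valuation v" obtains "v x = Pinf" | c where "v x = Fin c"
  using val_nonMinf[OF assms, of x] by (cases "v x") auto

lemma val_mult: "valuation v \<Longrightarrow> v (x * y) = v x + v y"
  unfolding valuation_def by blast

lemma val_add: "valuation v \<Longrightarrow> min (v x) (v y) \<le> v (x + y)"
  unfolding valuation_def by blast

lemma val_zero[simp]: "valuation v \<Longrightarrow> v 0 = Pinf"
  unfolding valuation_def by blast

lemma val_eq_Pinf: "valuation v \<Longrightarrow> v x = Pinf \<longleftrightarrow> x = 0"
  unfolding valuation_def by blast

lemma val_one: assumes "valuation v" shows "v 1 = 0"
proof -
  obtain c where c: "v 1 = Fin c" using assms val_eq_Pinf[OF assms, of 1] val_cases[OF assms, of 1] by auto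
  have "v 1 = v 1 + v 1" using val_mult[OF assms, of 1 1] by simp
  then have "c = c + c" using c by simp
  then have "c = 0" by (metis add_cancel_right_right)
  then show ?thesis using c by (simp add: zero_extended_def)
qed

lemma val_minus_one: assumes "valuation v" shows "v (-1) = 0"
proof -
  obtain c where c: "v (-1) = Fin c" using assms val_eq_Pinf[OF assms, of "-1"] val_cases[OF assms, of "-1"] by auto
  have "v 1 = v (-1) + v (-1)" using val_mult[OF assms, of "-1" "-1"] by simp
  then have "c + c = 0" using c val_one[OF assms] by (simp add: zero_extended_def)
  then have "c = 0"
    using add_pos_pos[of c c] add_neg_neg[of c c] by (cases rule: linorder_cases[of c 0]) auto
  then show ?thesis using c by (simp add: zero_extended_def)
qed

lemma val_uminus: assumes "valuation v" shows "v (- x) = v x"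
  using val_mult[OF assms, of "-1" x] val_minus_one[OF assms] by simp

lemma val_diff_comm: assumes "valuation v" shows "v (x - y) = v (y - x)"
  using val_uminus[OF assms, of "x - y"] by simp

lemma val_strict: assumes "valuation v" and "v x < v y" shows "v (x + y) = v x"
proof -
  have 1: "min (v x) (v y) \<le> v (x + y)" by (rule val_add[OF assms(1)])
  have "min (v (x+y)) (v (-y)) \<le> v ((x + y) + (-y))" by (rule val_add[OF assms(1)])
  then have 2: "min (v (x+y)) (v y) \<le> v x" using val_uminus[OF assms(1)] by simp
  show ?thesis using 1 2 assms(2) by (auto simp: min_def split: if_splits)
qed

lemma nsmul_0[simp]: "nsmul 0 x = 0" by (simp add: nsmul_def)
lemma nsmul_Suc: "nsmul (Suc n) x = nsmul n x + x" by (simp add: nsmul_def)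
lemma nsmul_add_nat: "nsmul (m + n) x = nsmul m x + nsmul n x"
  by (induct n) (simp_all add: nsmul_Suc add.assoc)
lemma nsmul_Fin: "nsmul n (Fin x) = Fin (nsmul n x)"
  by (induct n) (simp_all add: nsmul_Suc zero_extended_def)
lemma nsmul_Pinf: "n > 0 \<Longrightarrow> nsmul n (Pinf::'a::comm_monoid_add extended) = Pinf"
proof (induct n)
  case (Suc n) then show ?case by (cases n) (auto simp: nsmul_Suc zero_extended_def)
qed simp
lemma nsmul_mono: "(x::'a::{ordered_ab_semigroup_add,comm_monoid_add} extended) \<le> y \<Longrightarrow> nsmul n x \<le> nsmul n y"
  by (induct n) (simp_all add: nsmul_Suc add_mono)
lemma nsmul_mono_g: "(x::'a::ordered_comm_monoid_add) \<le> y \<Longrightarrow> nsmul n x \<le> nsmul n y"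
  by (induct n) (simp_all add: nsmul_Suc add_mono)
lemma nsmul_distrib_g: "nsmul n ((x::'a::comm_monoid_add) + y) = nsmul n x + nsmul n y"
  by (induct n) (simp_all add: nsmul_Suc algebra_simps)
lemma nsmul_pos: "(0::'a::linordered_ab_group_add) < x \<Longrightarrow> n > 0 \<Longrightarrow> 0 < nsmul n x"
proof (induct n)
  case (Suc n) then show ?case by (cases n) (auto simp: nsmul_Suc intro: add_pos_pos)
qed simp

lemma val_power: assumes "valuation v" shows "v (x ^ n) = nsmul n (v x)"
  by (induct n) (simp_all add: nsmul_Suc val_mult[OF assms] val_one[OF assms] add.commute)

lemma val_of_nat: assumes "valuation v" shows "0 \<le> v (of_nat n)"
proof (induct n)
  case (Suc n)
  have "min (v 1) (v (of_nat n)) \<le> v (1 + of_nat n)" by (rule val_add[OF assms])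
  then show ?case using Suc val_one[OF assms] by (auto simp: min_def split: if_splits)
qed (simp add: assms)

lemma val_sum_ge: assumes "valuation v" "finite A" "\<forall>k\<in>A. m \<le> v (t k)"
  shows "m \<le> v (sum t A)"
  using assms(2,3)
proof (induct A rule: finite_induct)
  case empty then show ?case using assms(1) by simp
next
  case (insert x F)
  have "min (v (t x)) (v (sum t F)) \<le> v (t x + sum t F)" by (rule val_add[OF assms(1)])
  then show ?case using insert by (auto simp: min_def split: if_splits)
qed

lemma val_sum_strict_min: assumes "valuation v" "finite A" "h \<in> A"
  "\<forall>k\<in>A. k \<noteq> h \<longrightarrow> v (t h) < v (t k)"
  shows "v (sum t A) = v (t h)"
proof (cases "A - {h} = {}")
  case True then have "A = {h}" using assms(3) by auto
  then show ?thesis by simp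
next
  case False
  have s: "sum t A = t h + sum t (A - {h})" using assms(2,3) by (simp add: sum.remove)
  have "\<forall>k\<in>A - {h}. Min ((\<lambda>k. v (t k)) ` (A - {h})) \<le> v (t k)" using assms(2) by auto
  then have "Min ((\<lambda>k. v (t k)) ` (A - {h})) \<le> v (sum t (A - {h}))"
    using val_sum_ge[OF assms(1)] assms(2) by blast
  moreover have "v (t h) < Min ((\<lambda>k. v (t k)) ` (A - {h}))"
    using False assms(2,4) by (subst Min_gr_iff) auto
  ultimately show ?thesis using s val_strict[OF assms(1)] by auto
qed

lemma unique_min: fixes f :: "'k \<Rightarrow> 'g::linorder extended"
  assumes "finite A" "A \<noteq> {}" "Min (f ` A) \<noteq> Pinf"
    "\<forall>k\<in>A. \<forall>l\<in>A. k \<noteq> l \<longrightarrow> f k \<noteq> Pinf \<longrightarrow> f k \<noteq> f l"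
  shows "\<exists>h\<in>A. f h = Min (f ` A) \<and> (\<forall>k\<in>A. k \<noteq> h \<longrightarrow> f h < f k)"
proof -
  have "Min (f ` A) \<in> f ` A" using assms(1,2) by (intro Min_in) auto
  then obtain h where h: "h \<in> A" "f h = Min (f ` A)" by auto
  have "\<forall>k\<in>A. k \<noteq> h \<longrightarrow> f h < f k"
  proof (intro ballI impI)
    fix k assume "k \<in> A" "k \<noteq> h"
    then have "f h \<le> f k" using h assms(1) by auto
    moreover have "f h \<noteq> f k" using assms(3,4) h \<open>k \<in> A\<close> \<open>k \<noteq> h\<close> by metis
    ultimately show "f h < f k" by simp
  qed
  then show ?thesis using h by blast
qed

lemma val_sum_eq_Min: assumes "valuation v" "finite A" "A \<noteq> {}"
  "\<forall>k\<in>A. \<forall>l\<in>A. k \<noteq> l \<longrightarrow> v (t k) \<noteq> Pinf \<longrightarrow> v (t k) \<noteq> v (t l)"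
  shows "v (sum t A) = Min ((\<lambda>k. v (t k)) ` A)"
proof (cases "Min ((\<lambda>k. v (t k)) ` A) = Pinf")
  case True
  then have "\<forall>k\<in>A. Pinf \<le> v (t k)" using assms(2) by (metis Min_le finite_imageI imageI)
  then have "Pinf \<le> v (sum t A)" using val_sum_ge[OF assms(1,2)] by blast
  then show ?thesis using True by simp
next
  case False
  from unique_min[of A "\<lambda>k. v (t k)", OF assms(2,3) False assms(4)]
  obtain h where "h \<in> A" "v (t h) = Min ((\<lambda>k. v (t k)) ` A)" "\<forall>k\<in>A. k \<noteq> h \<longrightarrow> v (t h) < v (t k)"
    by blast
  then show ?thesis using val_sum_strict_min[OF assms(1,2)] by metis
qed




lemma pcompose_monom: "pcompose (monom a n) q = smult a (q ^ n)"
  by (induct n) (simp_all add: monom_0 monom_Suc pcompose_pCons)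

lemma coeff_lin_power: "coeff ([:c, 1:] ^ n) l = of_nat (n choose l) * (c::'a::comm_ring_1) ^ (n - l)"
proof (cases "l \<le> n")
  case True then show ?thesis using coeff_linear_poly_power[of l n c 1] by simp
next
  case False
  then have "coeff ([:c, 1:] ^ n) l = 0" by (intro coeff_eq_0) (simp add: degree_linear_power)
  then show ?thesis using False by (simp add: binomial_eq_0)
qed

lemma coeff_pcompose_lin:
  "coeff (pcompose p [:c, 1:]) l = (\<Sum>n\<le>degree p. coeff p n * of_nat (n choose l) * (c::'a::comm_ring_1) ^ (n - l))"
proof -
  have "pcompose p [:c, 1:] = pcompose (\<Sum>n\<le>degree p. monom (coeff p n) n) [:c, 1:]"
    by (simp add: poly_as_sum_of_monoms)
  also have "\<dots> = (\<Sum>n\<le>degree p. smult (coeff p n) ([:c, 1:] ^ n))"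
    by (simp add: pcompose_sum pcompose_monom)
  finally show ?thesis by (simp add: coeff_sum coeff_lin_power mult.assoc)
qed

lemma degree_pcompose_lin[simp]: "degree (pcompose p [:c, 1:]) = degree (p::'a::idom poly)"
  by (simp add: degree_pcompose)

lemma poly_expand: "poly p (y::'a::idom) = (\<Sum>k\<le>degree p. coeff (pcompose p [:c, 1:]) k * (y - c) ^ k)"
proof -
  have "poly p y = poly (pcompose p [:c, 1:]) (y - c)" by (simp add: poly_pcompose)
  also have "\<dots> = (\<Sum>k\<le>degree (pcompose p [:c, 1:]). coeff (pcompose p [:c, 1:]) k * (y - c) ^ k)"
    by (rule poly_altdef)
  finally show ?thesis by simp
qed

definition hasse :: "'a::comm_ring_1 poly \<Rightarrow> nat \<Rightarrow> 'a poly" where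
  "hasse p k = (\<Sum>n\<le>degree p. monom (coeff p n * of_nat (n choose k)) (n - k))"

lemma poly_hasse: "poly (hasse p k) c = coeff (pcompose p [:c, 1:]) k"
  by (simp add: hasse_def poly_sum poly_monom coeff_pcompose_lin)

lemma degree_hasse: "degree (hasse p k) \<le> degree p - k"
proof (rule degree_le, intro allI impI)
  fix m assume m: "degree p - k < m"
  show "coeff (hasse p k) m = 0"
    unfolding hasse_def coeff_sum coeff_monom
  proof (rule sum.neutral, intro ballI)
    fix n assume "n \<in> {..degree p}"
    then have "n - k \<noteq> m" using m by auto
    then show "(if n - k = m then coeff p n * of_nat (n choose k) else 0) = 0" by simp
  qed
qed

lemma pcompose_shift: "pcompose (pcompose p [:c, 1:]) [:d, 1:] = pcompose p [:c + d, (1::'a::comm_ring_1):]"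
  by (simp add: pcompose_assoc[symmetric] pcompose_pCons algebra_simps)




definition MV :: "('a::field \<Rightarrow> 'g::linordered_ab_group_add extended) \<Rightarrow> 'g extended \<Rightarrow> 'a poly \<Rightarrow> 'g extended" where
  "MV v \<gamma> p = Min ((\<lambda>k. v (coeff p k) + nsmul k \<gamma>) ` {..degree p})"

lemma mono_val_MV: "mono_val v c \<gamma> g = MV v \<gamma> (pcompose g [:c, 1:])"
  by (simp add: mono_val_def MV_def)

lemma Pinf_plus[simp]: "Pinf + (x::'a::plus extended) = Pinf"
  by (cases x) auto

lemma MV_le: "k \<le> degree p \<Longrightarrow> MV v \<gamma> p \<le> v (coeff p k) + nsmul k \<gamma>"
  unfolding MV_def by (intro Min_le) auto

lemma MV_ge: assumes "valuation v" "\<gamma> \<le> v \<delta>"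
  shows "MV v \<gamma> p \<le> MV v \<gamma> (pcompose p [:\<delta>, 1:])"
proof -
  let ?q = "pcompose p [:\<delta>, 1:]"
  have "MV v \<gamma> p \<le> v (coeff ?q l) + nsmul l \<gamma>" if l: "l \<le> degree p" for l
  proof -
    define t where "t n = coeff p n * of_nat (n choose l) * \<delta> ^ (n - l)" for n
    have cq: "coeff ?q l = sum t {..degree p}" unfolding t_def by (rule coeff_pcompose_lin)
    have tn: "MV v \<gamma> p \<le> v (t n) + nsmul l \<gamma>" if n: "n \<le> degree p" for n
    proof (cases "n < l")
      case True then show ?thesis by (simp add: t_def assms(1) binomial_eq_0)
    next
      case False
      have "v (t n) = v (coeff p n) + v (of_nat (n choose l)) + nsmul (n - l) (v \<delta>)"
        unfolding t_def by (simp add: val_mult[OF assms(1)] val_power[OF assms(1)])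
      also have "\<dots> \<ge> v (coeff p n) + 0 + nsmul (n - l) \<gamma>"
        by (intro add_mono order_refl val_of_nat[OF assms(1)] nsmul_mono assms(2))
      finally have "v (coeff p n) + nsmul (n - l) \<gamma> + nsmul l \<gamma> \<le> v (t n) + nsmul l \<gamma>"
        by (simp add: add_right_mono)
      moreover have "nsmul (n - l) \<gamma> + nsmul l \<gamma> = nsmul n \<gamma>"
        using False by (simp add: nsmul_add_nat[symmetric])
      ultimately have "v (coeff p n) + nsmul n \<gamma> \<le> v (t n) + nsmul l \<gamma>" by (simp add: add.assoc)
      then show ?thesis using MV_le[OF n, of v \<gamma>] by order
    qed
    have "Min ((\<lambda>n. v (t n)) ` {..degree p}) \<in> (\<lambda>n. v (t n)) ` {..degree p}"
      by (intro Min_in) auto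
    then obtain n0 where n0: "n0 \<le> degree p" "v (t n0) = Min ((\<lambda>n. v (t n)) ` {..degree p})" by (metis atMost_iff imageE)
    have "v (t n0) \<le> v (sum t {..degree p})"
      using n0 by (intro val_sum_ge[OF assms(1)]) auto
    then have "v (t n0) + nsmul l \<gamma> \<le> v (coeff ?q l) + nsmul l \<gamma>"
      using cq by (simp add: add_right_mono)
    then show ?thesis using tn[OF n0(1)] by order
  qed
  then show ?thesis unfolding MV_def[of v \<gamma> ?q] by (intro Min.boundedI) auto
qed

lemma MV_shift: assumes "valuation v" "\<gamma> \<le> v \<delta>"
  shows "MV v \<gamma> (pcompose p [:\<delta>, 1:]) = MV v \<gamma> p"
proof -
  have "pcompose (pcompose p [:\<delta>, 1:]) [:-\<delta>, 1:] = p"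
    by (simp add: pcompose_shift)
  moreover have "\<gamma> \<le> v (-\<delta>)" using assms by (simp add: val_uminus)
  ultimately have "MV v \<gamma> (pcompose p [:\<delta>, 1:]) \<le> MV v \<gamma> p"
    using MV_ge[OF assms(1), of \<gamma> "-\<delta>" "pcompose p [:\<delta>, 1:]"] by simp
  then show ?thesis using MV_ge[OF assms, of p] by order
qed

lemma mono_val_shift: assumes "valuation v" "\<gamma> \<le> v (c' - c)"
  shows "mono_val v c' \<gamma> g = mono_val v c \<gamma> g"
proof -
  have "pcompose g [:c', 1:] = pcompose (pcompose g [:c, 1:]) [:c' - c, 1:]"
    by (simp add: pcompose_shift)
  then show ?thesis unfolding mono_val_MV using MV_shift[OF assms] by simp
qed




lemma Istar_sub: "Istar I \<subseteq> I" by (auto simp: Istar_def)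

lemma succ_props: assumes "i \<in> Istar I"
  shows "succ_in I i \<in> I" "i < succ_in I i" "\<And>j. j \<in> I \<Longrightarrow> i < j \<Longrightarrow> succ_in I i \<le> j"
proof -
  obtain j where j: "j \<in> I" "i < j" using assms by (auto simp: Istar_def)
  have "succ_in I i \<in> I \<and> i < succ_in I i" unfolding succ_in_def
    by (rule LeastI[of "\<lambda>j. j \<in> I \<and> i < j" j]) (use j in auto)
  then show "succ_in I i \<in> I" "i < succ_in I i" by auto
  show "\<And>j. j \<in> I \<Longrightarrow> i < j \<Longrightarrow> succ_in I i \<le> j" unfolding succ_in_def by (rule Least_le) auto
qed

lemma pc_val: assumes "valuation v" "pseudo_cauchy v I a" "i \<in> Istar I" "j \<in> I" "i < j"
  shows "v (a j - a i) = pc_gamma v I a i"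
proof -
  let ?s = "succ_in I i"
  note s = succ_props[OF assms(3)]
  have iI: "i \<in> I" using assms(3) Istar_sub by auto
  show ?thesis
  proof (cases "j = ?s")
    case True then show ?thesis by (simp add: pc_gamma_def)
  next
    case False
    then have "?s < j" using s(3)[OF assms(4,5)] by auto
    then have "v (a i - a ?s) < v (a ?s - a j)"
      using assms(2) iI s(1,2) assms(4) unfolding pseudo_cauchy_def by blast
    then have "v (a ?s - a i) < v (a j - a ?s)"
      using val_diff_comm[OF assms(1)] by metis
    then have "v ((a ?s - a i) + (a j - a ?s)) = v (a ?s - a i)" by (rule val_strict[OF assms(1)])
    then show ?thesis by (simp add: pc_gamma_def)
  qed
qed

lemma pc_mono: assumes "valuation v" "pseudo_cauchy v I a" "i \<in> Istar I" "j \<in> Istar I" "i < j"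
  shows "pc_gamma v I a i < pc_gamma v I a j"
proof -
  note s = succ_props[OF assms(4)]
  have I: "i \<in> I" "j \<in> I" using assms(3,4) Istar_sub by auto
  have "pc_gamma v I a i = v (a j - a i)" using pc_val[OF assms(1,2,3) I(2) assms(5)] by simp
  also have "\<dots> = v (a i - a j)" by (rule val_diff_comm[OF assms(1)])
  also have "\<dots> < v (a j - a (succ_in I j))"
    using assms(2) I s(1,2) assms(5) unfolding pseudo_cauchy_def by blast
  also have "\<dots> = pc_gamma v I a j" unfolding pc_gamma_def by (rule val_diff_comm[OF assms(1)])
  finally show ?thesis .
qed

lemma nomax: "\<not> has_max S \<Longrightarrow> i \<in> S \<Longrightarrow> \<exists>j\<in>S. i < (j::'i::linorder)"
  unfolding has_max_def by (auto simp: not_le)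

lemma pc_fin: assumes "valuation v" "pseudo_cauchy v I a" "\<not> has_max (Istar I)" "i \<in> Istar I"
  shows "pc_gamma v I a i = Fin (case pc_gamma v I a i of Fin x \<Rightarrow> x)"
proof -
  obtain j where j: "j \<in> Istar I" "i < j" using nomax[OF assms(3,4)] by auto
  have "pc_gamma v I a i < pc_gamma v I a j" by (rule pc_mono[OF assms(1,2,4) j])
  then have "pc_gamma v I a i \<noteq> Pinf" by auto
  moreover have "pc_gamma v I a i \<noteq> Minf" unfolding pc_gamma_def by (rule val_nonMinf[OF assms(1)])
  ultimately show ?thesis by (cases "pc_gamma v I a i") auto
qed

lemma Istar_ne: assumes "pseudo_cauchy v I a" shows "Istar I \<noteq> {}"
proof -
  obtain i j where "i \<in> I" "j \<in> I" "i \<noteq> j" using assms unfolding pseudo_cauchy_def by auto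
  then show ?thesis unfolding Istar_def by (cases i j rule: linorder_cases) auto
qed

definition ev :: "'i::linorder set \<Rightarrow> ('i \<Rightarrow> bool) \<Rightarrow> bool" where
  "ev S P \<longleftrightarrow> (\<exists>i0\<in>S. \<forall>i\<in>S. i0 \<le> i \<longrightarrow> P i)"

lemma ev_conj: "ev S P \<Longrightarrow> ev S Q \<Longrightarrow> ev S (\<lambda>i. P i \<and> Q i)"
  unfolding ev_def
proof (elim bexE)
  fix i0 i1 assume "i0 \<in> S" "\<forall>i\<in>S. i0 \<le> i \<longrightarrow> P i" "i1 \<in> S" "\<forall>i\<in>S. i1 \<le> i \<longrightarrow> Q i"
  then show "\<exists>i0\<in>S. \<forall>i\<in>S. i0 \<le> i \<longrightarrow> P i \<and> Q i"
    by (intro bexI[of _ "max i0 i1"]) (auto simp: max_def)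
qed

lemma ev_mono: "ev S P \<Longrightarrow> (\<And>i. i \<in> S \<Longrightarrow> P i \<Longrightarrow> Q i) \<Longrightarrow> ev S Q"
  unfolding ev_def by blast

lemma ev_true: "S \<noteq> {} \<Longrightarrow> ev S (\<lambda>i. True)"
  unfolding ev_def by auto

lemma ev_ball: assumes "S \<noteq> {}" "finite K" "\<forall>k\<in>K. ev S (P k)"
  shows "ev S (\<lambda>i. \<forall>k\<in>K. P k i)"
  using assms(2,3)
proof (induct K rule: finite_induct)
  case empty then show ?case using ev_true[OF assms(1)] by simp
next
  case (insert x F)
  then have "ev S (\<lambda>i. P x i \<and> (\<forall>k\<in>F. P k i))" by (intro ev_conj) auto
  then show ?case by (rule ev_mono) auto
qed

lemma nsmul_strict: "(0::'g::linordered_ab_group_add) < \<delta> \<Longrightarrow> k < l \<Longrightarrow> nsmul k \<delta> < nsmul l \<delta>"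
proof -
  assume "0 < \<delta>" "k < l"
  then have "nsmul l \<delta> = nsmul k \<delta> + nsmul (l - k) \<delta>" "0 < nsmul (l - k) \<delta>"
    using nsmul_add_nat[of k "l - k" \<delta>] nsmul_pos[of \<delta> "l - k"] by auto
  then show ?thesis by simp
qed

lemma lines_core: fixes x y :: "'g::linordered_ab_group_add"
  assumes "c + nsmul k x = c' + nsmul l x" "c + nsmul k y = c' + nsmul l y" "x < y" "k \<noteq> l"
  shows False
proof -
  define \<delta> where "\<delta> = y - x"
  have y: "y = x + \<delta>" and d: "0 < \<delta>" using assms(3) by (auto simp: \<delta>_def)
  have "(c + nsmul k x) + nsmul k \<delta> = (c' + nsmul l x) + nsmul l \<delta>"
    using assms(2) unfolding y nsmul_distrib_g by (simp add: ac_simps)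
  then have "nsmul k \<delta> = nsmul l \<delta>" unfolding assms(1) by simp
  moreover have "nsmul k \<delta> \<noteq> nsmul l \<delta>"
    using nsmul_strict[OF d, of k l] nsmul_strict[OF d, of l k] assms(4) by (cases k l rule: linorder_cases) auto
  ultimately show False by simp
qed

lemma lines_ev: fixes gg :: "'i::linorder \<Rightarrow> 'g::linordered_ab_group_add"
  assumes "S \<noteq> {}" "\<forall>i\<in>S. \<exists>j\<in>S. i < j" "\<forall>i\<in>S. \<forall>j\<in>S. i < j \<longrightarrow> gg i < gg j" "k \<noteq> l"
  shows "ev S (\<lambda>i. Fin c + nsmul k (Fin (gg i)) \<noteq> cl + nsmul l (Fin (gg i)))"
proof (cases cl)
  case (Fin c')
  show ?thesis
  proof (cases "\<exists>t\<in>S. c + nsmul k (gg t) = c' + nsmul l (gg t)")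
    case True
    then obtain t where t: "t \<in> S" "c + nsmul k (gg t) = c' + nsmul l (gg t)" by auto
    obtain j where j: "j \<in> S" "t < j" using assms(2) t(1) by auto
    show ?thesis unfolding ev_def
    proof (intro bexI[OF _ j(1)] ballI impI)
      fix i assume i: "i \<in> S" "j \<le> i"
      then have "gg t < gg i" using assms(3) t(1) j by auto
      then have "c + nsmul k (gg i) \<noteq> c' + nsmul l (gg i)" using lines_core[OF t(2) _ _ assms(4)] by blast
      then show "Fin c + nsmul k (Fin (gg i)) \<noteq> cl + nsmul l (Fin (gg i))" using Fin by (simp add: nsmul_Fin)
    qed
  next
    case False
    then show ?thesis using assms(1) Fin unfolding ev_def by (auto simp: nsmul_Fin)
  qed
next
  case Pinf
  then show ?thesis using assms(1) unfolding ev_def by (auto simp: nsmul_Fin)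
next
  case Minf
  have "Minf + nsmul l (Fin x) = Minf" for x :: 'g by (simp add: nsmul_Fin)
  then show ?thesis using assms(1) Minf unfolding ev_def by (auto simp: nsmul_Fin)
qed




theorem lemma5p7:
  fixes v :: "'a::field \<Rightarrow> 'g::linordered_ab_group_add extended"
    and I :: "'i::wellorder set" and a :: "'i \<Rightarrow> 'a" and g :: "'a poly"
  assumes "valuation v"
    and "pseudo_cauchy v I a"
    and "\<not> has_max (Istar I)"
    and "transcendental_type v I a \<or> (algebraic_type v I a \<and> gamma_finite v I a)"
    and "\<forall>f. degree f < degree g \<longrightarrow> fixed_by v I a f"
  shows "\<exists>i0\<in>Istar I. \<forall>i\<in>Istar I. i0 \<le> i \<longrightarrow> v (poly g (a i)) = pc_nu v I a i g"
proof -
  note V = assms(1) and P = assms(2)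
  define S where "S = Istar I"
  have Sne: "S \<noteq> {}" unfolding S_def by (rule Istar_ne[OF P])
  have nm: "\<forall>i\<in>S. \<exists>j\<in>S. i < j" unfolding S_def using nomax[OF assms(3)] by blast
  have SI: "S \<subseteq> I" unfolding S_def by (rule Istar_sub)
  define \<gamma> where "\<gamma> i = pc_gamma v I a i" for i
  define gg where "gg i = (case \<gamma> i of Fin x \<Rightarrow> x)" for i
  have gfin: "\<And>i. i \<in> S \<Longrightarrow> \<gamma> i = Fin (gg i)"
    unfolding gg_def \<gamma>_def S_def using pc_fin[OF V P assms(3)] by blast
  have gmono: "\<And>i j. i \<in> S \<Longrightarrow> j \<in> S \<Longrightarrow> i < j \<Longrightarrow> \<gamma> i < \<gamma> j"
    unfolding \<gamma>_def S_def using pc_mono[OF V P] by blast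
  have ggmono: "\<forall>i\<in>S. \<forall>j\<in>S. i < j \<longrightarrow> gg i < gg j"
  proof (intro ballI impI)
    fix i j assume ij: "i \<in> S" "j \<in> S" "i < j"
    have "\<gamma> i < \<gamma> j" by (rule gmono[OF ij])
    then show "gg i < gg j" unfolding gfin[OF ij(1)] gfin[OF ij(2)] by simp
  qed
  have gval: "\<And>i j. i \<in> S \<Longrightarrow> j \<in> I \<Longrightarrow> i < j \<Longrightarrow> v (a j - a i) = \<gamma> i"
    unfolding \<gamma>_def S_def using pc_val[OF V P] by blast
  define d where "d = degree g"
  define b where "b i k = coeff (pcompose g [:a i, 1:]) k" for i k
  define T where "T i k = v (b i k) + nsmul k (\<gamma> i)" for i k
  have nu: "\<And>i. pc_nu v I a i g = Min (T i ` {..d})"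
    unfolding pc_nu_def mono_val_def T_def b_def d_def \<gamma>_def by simp
  have T0: "\<And>i. T i 0 = v (poly g (a i))" unfolding T_def b_def by simp
  have Gsuff: "v (poly g (a i)) = pc_nu v I a i g" if "\<forall>k\<in>{..d}. v (poly g (a i)) \<le> T i k" for i
    unfolding nu using that T0[of i] by (intro Min_eqI[symmetric]) (auto intro: image_eqI[of _ _ 0])
  have ev_goal: "ev S (\<lambda>i. v (poly g (a i)) = pc_nu v I a i g)"
  proof (cases "has_max I")
    case True
    then obtain m where m: "m \<in> I" "\<forall>i\<in>I. i \<le> m" unfolding has_max_def by auto
    have im: "\<And>i. i \<in> S \<Longrightarrow> i < m" using m unfolding S_def Istar_def by force
    define e where "e k = coeff (pcompose g [:a m, 1:]) k" for k
    define F where "F i k = v (e k) + nsmul k (Fin (gg i))" for i k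
    have nuB: "pc_nu v I a i g = Min (F i ` {..d})" if i: "i \<in> S" for i
    proof -
      have vm: "v (a i - a m) = \<gamma> i" using gval[OF i m(1) im[OF i]] val_diff_comm[OF V, of "a i" "a m"] by simp
      have "pc_nu v I a i g = mono_val v (a m) (\<gamma> i) g"
        unfolding pc_nu_def \<gamma>_def[symmetric] by (rule mono_val_shift[OF V]) (simp add: vm)
      then show ?thesis unfolding mono_val_def F_def e_def d_def gfin[OF i] by simp
    qed
    have dist: "ev S (\<lambda>i. \<forall>k\<in>{..d}. \<forall>l\<in>{..d}. k \<noteq> l \<longrightarrow> v (e k) \<noteq> Pinf \<longrightarrow> F i k \<noteq> F i l)"
    proof (intro ev_ball[OF Sne] ballI)
      fix k l
      show "ev S (\<lambda>i. k \<noteq> l \<longrightarrow> v (e k) \<noteq> Pinf \<longrightarrow> F i k \<noteq> F i l)"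
      proof (cases "k \<noteq> l \<and> v (e k) \<noteq> Pinf")
        case True
        then obtain c where c: "v (e k) = Fin c" using val_cases[OF V, of "e k"] by metis
        have "ev S (\<lambda>i. Fin c + nsmul k (Fin (gg i)) \<noteq> v (e l) + nsmul l (Fin (gg i)))"
          using True by (intro lines_ev[OF Sne nm ggmono]) auto
        then show ?thesis unfolding F_def c by (rule ev_mono) auto
      next
        case False
        then show ?thesis using Sne unfolding ev_def by auto
      qed
    qed auto
    show ?thesis using dist
    proof (rule ev_mono)
      fix i assume i: "i \<in> S" and D: "\<forall>k\<in>{..d}. \<forall>l\<in>{..d}. k \<noteq> l \<longrightarrow> v (e k) \<noteq> Pinf \<longrightarrow> F i k \<noteq> F i l"
      have vm: "v (a i - a m) = Fin (gg i)" using gval[OF i m(1) im[OF i]] val_diff_comm[OF V, of "a i" "a m"] gfin[OF i] by simp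
      define t where "t k = e k * (a i - a m) ^ k" for k
      have vt: "v (t k) = F i k" for k
        unfolding t_def F_def by (simp add: val_mult[OF V] val_power[OF V] vm)
      have "poly g (a i) = sum t {..d}" unfolding t_def e_def d_def by (rule poly_expand)
      also have "v \<dots> = Min ((\<lambda>k. v (t k)) ` {..d})"
      proof (rule val_sum_eq_Min[OF V])
        show "\<forall>k\<in>{..d}. \<forall>l\<in>{..d}. k \<noteq> l \<longrightarrow> v (t k) \<noteq> Pinf \<longrightarrow> v (t k) \<noteq> v (t l)"
        proof (intro ballI impI)
          fix k l assume kl: "k \<in> {..d}" "l \<in> {..d}" "k \<noteq> l" "v (t k) \<noteq> Pinf"
          then have "v (e k) \<noteq> Pinf" using vt[of k] unfolding F_def by auto
          then show "v (t k) \<noteq> v (t l)" unfolding vt using D kl(1-3) by blast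
        qed
      qed auto
      finally show "v (poly g (a i)) = pc_nu v I a i g" unfolding nuB[OF i] vt by simp
    qed
  next
    case False
    have "\<forall>i\<in>I. \<exists>j\<in>I. i < j" using False unfolding has_max_def by (auto simp: not_le)
    then have SIeq: "S = I" unfolding S_def Istar_def by auto
    define A1 where "A1 = {1..d}"
    have "\<forall>k\<in>A1. \<exists>C. C \<noteq> Minf \<and> ev S (\<lambda>i. v (b i k) = C)"
    proof
      fix k assume k: "k \<in> A1"
      have "degree (hasse g k) < degree g"
        using degree_hasse[of g k] k unfolding A1_def d_def by auto
      then have "fixed_by v I a (hasse g k)" using assms(5) by blast
      then obtain i0 where i0: "i0 \<in> I" "\<forall>i\<in>I. \<forall>j\<in>I. i0 \<le> i \<and> i0 \<le> j \<longrightarrow> v (b i k) = v (b j k)"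
        unfolding fixed_by_def poly_hasse b_def by blast
      have "v (b i0 k) \<noteq> Minf" by (rule val_nonMinf[OF V])
      moreover have "ev S (\<lambda>i. v (b i k) = v (b i0 k))" unfolding ev_def SIeq
      proof (intro bexI[OF _ i0(1)] ballI impI)
        fix i assume "i \<in> I" "i0 \<le> i"
        then show "v (b i k) = v (b i0 k)" using i0 by blast
      qed
      ultimately show "\<exists>C. C \<noteq> Minf \<and> ev S (\<lambda>i. v (b i k) = C)" by blast
    qed
    then obtain C where C: "\<forall>k\<in>A1. C k \<noteq> Minf \<and> ev S (\<lambda>i. v (b i k) = C k)"
      using bchoice[of A1 "\<lambda>k C. C \<noteq> Minf \<and> ev S (\<lambda>i. v (b i k) = C)"] by blast
    define P1 where "P1 i = (\<forall>k\<in>A1. v (b i k) = C k)" for i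
    define P2 where "P2 i = (\<forall>k\<in>A1. \<forall>l\<in>A1. k \<noteq> l \<longrightarrow> C k \<noteq> Pinf \<longrightarrow>
                 C k + nsmul k (Fin (gg i)) \<noteq> C l + nsmul l (Fin (gg i)))" for i
    have E1: "ev S P1" unfolding P1_def
      using C by (intro ev_ball[OF Sne]) (auto simp: A1_def)
    have E2: "ev S P2" unfolding P2_def
    proof (intro ev_ball[OF Sne] ballI)
      fix k l assume k: "k \<in> A1"
      show "ev S (\<lambda>i. k \<noteq> l \<longrightarrow> C k \<noteq> Pinf \<longrightarrow> C k + nsmul k (Fin (gg i)) \<noteq> C l + nsmul l (Fin (gg i)))"
      proof (cases "k \<noteq> l \<and> C k \<noteq> Pinf")
        case True
        then obtain c where c: "C k = Fin c" using C k by (cases "C k") auto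
        have "ev S (\<lambda>i. Fin c + nsmul k (Fin (gg i)) \<noteq> C l + nsmul l (Fin (gg i)))"
          using True by (intro lines_ev[OF Sne nm ggmono]) auto
        then show ?thesis unfolding c by (rule ev_mono) auto
      next
        case False
        then show ?thesis using Sne unfolding ev_def by auto
      qed
    qed (auto simp: A1_def)
    have "ev S (\<lambda>i. P1 i \<and> P2 i)" by (rule ev_conj[OF E1 E2])
    then obtain i1 where i1: "i1 \<in> S" "\<And>i. i \<in> S \<Longrightarrow> i1 \<le> i \<Longrightarrow> P1 i \<and> P2 i"
      unfolding ev_def by blast
    have TC: "T i k = C k + nsmul k (Fin (gg i))" if "i \<in> S" "i1 \<le> i" "k \<in> A1" for i k
      using i1(2)[OF that(1,2)] that unfolding T_def gfin[OF that(1)] P1_def by simp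
    show ?thesis
    proof (cases "\<forall>i\<in>S. i1 \<le> i \<longrightarrow> v (poly g (a i)) = pc_nu v I a i g")
      case True then show ?thesis unfolding ev_def using i1(1) by blast
    next
      case False
      then obtain i where i: "i \<in> S" "i1 \<le> i" "v (poly g (a i)) \<noteq> pc_nu v I a i g" by blast
      have "Min (T i ` {..d}) \<le> T i 0" by (intro Min_le) auto
      then have lt: "Min (T i ` {..d}) < T i 0" using i(3) T0[of i] nu[of i] by auto
      have "Min (T i ` {..d}) \<in> T i ` {..d}" by (intro Min_in) auto
      then obtain k0 where k0: "k0 \<le> d" "T i k0 < T i 0" using lt by (metis atMost_iff imageE)
      then have k0A: "k0 \<in> A1" unfolding A1_def by (cases k0) auto
      have A1ne: "A1 \<noteq> {}" "finite A1" using k0A by (auto simp: A1_def)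
      have "Min (T i ` A1) \<le> T i k0" using A1ne k0A by (intro Min_le) auto
      then have MA: "Min (T i ` A1) < T i 0" using k0 by order
      then have "Min (T i ` A1) \<noteq> Pinf" by auto
      moreover have "\<forall>k\<in>A1. \<forall>l\<in>A1. k \<noteq> l \<longrightarrow> T i k \<noteq> Pinf \<longrightarrow> T i k \<noteq> T i l"
      proof (intro ballI impI)
        fix k l assume kl: "k \<in> A1" "l \<in> A1" "k \<noteq> l" "T i k \<noteq> Pinf"
        then have "C k \<noteq> Pinf" using TC[OF i(1,2)] by auto
        then show "T i k \<noteq> T i l" unfolding TC[OF i(1,2) kl(1)] TC[OF i(1,2) kl(2)]
          using i1(2)[OF i(1,2)] kl(1-3) \<open>C k \<noteq> Pinf\<close> unfolding P2_def by blast
      qed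
      ultimately obtain h where h: "h \<in> A1" "T i h = Min (T i ` A1)" "\<forall>k\<in>A1. k \<noteq> h \<longrightarrow> T i h < T i k"
        using unique_min[OF A1ne(2,1)] by blast
      have hmin: "\<forall>k\<in>{..d}. k \<noteq> h \<longrightarrow> T i h < T i k"
      proof (intro ballI impI)
        fix k assume "k \<in> {..d}" "k \<noteq> h"
        then show "T i h < T i k" using h MA by (cases "k = 0") (auto simp: A1_def)
      qed
      obtain j0 where j0: "j0 \<in> S" "i < j0" using nm i(1) by blast
      have "v (poly g (a j)) = pc_nu v I a j g" if j: "j \<in> S" "j0 \<le> j" for j
      proof -
        have ij: "i < j" using j0 j by auto
        have jI: "j \<in> I" using j SI by auto
        define t where "t k = b i k * (a j - a i) ^ k" for k
        have vt: "v (t k) = T i k" for k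
          unfolding t_def T_def by (simp add: val_mult[OF V] val_power[OF V] gval[OF i(1) jI ij])
        have "poly g (a j) = sum t {..d}" unfolding t_def b_def d_def by (rule poly_expand)
        then have vpj: "v (poly g (a j)) = T i h"
          using val_sum_strict_min[OF V, of "{..d}" h t] hmin h(1) vt unfolding A1_def by auto
        show ?thesis
        proof (rule Gsuff, intro ballI)
          fix k assume k: "k \<in> {..d}"
          show "v (poly g (a j)) \<le> T j k"
          proof (cases "k = 0")
            case True then show ?thesis using T0[of j] by simp
          next
            case False
            then have kA: "k \<in> A1" using k by (auto simp: A1_def)
            have "T i h \<le> T i k" using h(2) kA A1ne by (simp add: Min_le)
            also have "T i k = C k + nsmul k (Fin (gg i))" by (rule TC[OF i(1,2) kA])
            also have "\<dots> \<le> C k + nsmul k (Fin (gg j))"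
              using ggmono i(1) j(1) ij by (intro add_left_mono nsmul_mono) (auto intro: less_imp_le)
            also have "\<dots> = T j k" using TC[OF j(1) _ kA] i(2) ij by simp
            finally show ?thesis using vpj by simp
          qed
        qed
      qed
      then show ?thesis unfolding ev_def using j0(1) by blast
    qed
  qed
  then show ?thesis unfolding ev_def S_def .
qed


end
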